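(* Let $(M,\boldsymbol p)$ be a projective manifold and suppose $\tau\in\Gamma(\mathcal E(2))$ solves $$\nabla_{(a}\nabla_b\nabla_{c)}\tau+4\mathsf P_{(ab}\nabla_{c)}\tau+2\tau\nabla_{(a}\mathsf P_{bc)}=0$$ (not necessarily a normal solution). Let $H_{\alpha\beta}:=\tau Y_\alpha Y_\beta+\nabla_c\tau\,Y_{(\alpha}Z_{\beta)}{}^c+Z_\alpha{}^aZ_\beta{}^b\big(\tfrac12\nabla_a\nabla_b\tau+\mathsf P_{ab}\tau\big)$ (which equals $\frac12D_\alpha D_\beta\tau$ and is projectively invariant). Then along every unparametrised geodesic $\gamma$, with weighted velocity $\mathbf u$ satisfying $\mathbf u^b\nabla_b\mathbf u^a=0$ and $\Sigma^{\alpha\beta}=2X^{[\alpha}W^{\beta]}{}_b\mathbf u^b$, the quantity $$\eta:=\Sigma^{\alpha_1\beta_1}\Sigma^{\alpha_2\beta_2}H_{\alpha_1\alpha_2}H_{\beta_1\beta_2}=\tau\,\mathbf u^a\mathbf u^b\nabla_a\nabla_b\tau+2\mathbf u^a\mathbf u^b\mathsf P_{ab}\tau^2-\tfrac12(\mathbf u^a\nabla_a\tau)^2$$ is constant. Moreover $k_{bc}:=\tau\nabla_b\nabla_c\tau+2\mathsf P_{bc}\tau^2-\frac12(\nabla_b\tau)(\nabla_c\tau)\in\Gamma(\odot^2T^*M(4))$ (symmetric part understood) satisfies the Killing equation $\nabla_{(a}k_{bc)}=0$.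
   Context: $(M,\boldsymbol p)$ projective manifold of dimension $n\ge2$; $\nabla\in\boldsymbol p$ any connection of the class (torsion-free affine connections related by $\hat\nabla_a\xi^b=\nabla_a\xi^b+\Upsilon_a\xi^b+\delta^b{}_a\Upsilon_c\xi^c$). Densities $\mathcal E(w):=\big((\Lambda^nTM)^{\otimes 2}\big)^{w/(2n+2)}$, $B(w):=B\otimes\mathcal E(w)$. Projective Schouten tensor $\mathsf P_{ab}$ of $\nabla$: $R_{ab}{}^c{}_d=W_{ab}{}^c{}_d+2\delta^c{}_{[a}\mathsf P_{b]d}+\beta_{ab}\delta^c{}_d$ with $W$ totally trace-free and $\beta_{ab}=-2\mathsf P_{[ab]}$, where $[\nabla_a,\nabla_b]v^c=R_{ab}{}^c{}_dv^d$. Projective tractors: $\mathcal T^*=J^1\mathcal E(1)$, $\mathcal T$ dual; canonical tractor $X^\alpha\in\Gamma(\mathcal T(1))$; a choice of $\nabla$ gives $Y_\alpha\in\Gamma(\mathcal T^*(-1))$, $Z_\alpha{}^a\in\Gamma(\mathcal T^*\otimes TM(1))$, $W^\alpha{}_a\in\Gamma(\mathcal T\otimes T^*M(-1))$ with $X^\alpha Y_\alpha=1$, $Z_\alpha{}^bW^\alpha{}_a=\delta^b{}_a$, $Y_\alpha W^\alpha{}_a=0$, $X^\alpha Z_\alpha{}^a=0$; tractor connection $\nabla_aX^\beta=W^\beta{}_a$, $\nabla_aW^\beta{}_b=-\mathsf P_{ab}X^\beta$, $\nabla_aY_\beta=\mathsf P_{ab}Z_\beta{}^b$, $\nabla_aZ_\beta{}^b=-\delta^b{}_aY_\beta$.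 Thomas-D operator $D_\alpha\sigma=wY_\alpha\sigma+Z_\alpha{}^a\nabla_a\sigma$ on $\mathcal E(w)$ (coupled to tractors). An unparametrised geodesic is an oriented curve admitting (locally) a parametrisation that is a geodesic of some/any $\nabla\in\boldsymbol p$; equivalently it carries a nowhere-vanishing $\mathbf u^a\in\Gamma(T\gamma(-2))$ with $\mathbf u^b\nabla_b\mathbf u^a=0$. *)

theory Defs
  imports "HOL-Analysis.Analysis"
begin

text \<open>The manifold is an open set U of real^'n (n = CARD('n));
  all bundles are trivialised by the coordinate frame, and densities of weight w by
  eps^w, where eps = (vol (x) vol)^(1/(2n+2)), vol = d_1 ^ ... ^ d_n.
  A connection is given by Christoffel symbols: Gam i j k = Gamma^k_(ij).
  Weighted covariant tensors are functions of an index list and a point.\<close>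

definition pd :: "'n::finite \<Rightarrow> (real^'n \<Rightarrow> real) \<Rightarrow> real^'n \<Rightarrow> real" where
  "pd i f x = deriv (\<lambda>t. f (x + t *\<^sub>R axis i 1)) 0"

definition iter_pd :: "'n::finite list \<Rightarrow> (real^'n \<Rightarrow> real) \<Rightarrow> real^'n \<Rightarrow> real" where
  "iter_pd is f = foldr pd is f"

definition smooth_on_open :: "(real^'n::finite) set \<Rightarrow> (real^'n \<Rightarrow> real) \<Rightarrow> bool" where
  "smooth_on_open U f \<longleftrightarrow> (\<forall>is. iter_pd is f differentiable_on U)"

definition cov :: "('n::finite \<Rightarrow> 'n \<Rightarrow> 'n \<Rightarrow> real^'n \<Rightarrow> real) \<Rightarrow> real
    \<Rightarrow> ('n list \<Rightarrow> real^'n \<Rightarrow> real) \<Rightarrow> ('n list \<Rightarrow> real^'n \<Rightarrow> real)" where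
  "cov Gam w T = (\<lambda>is x. case is of [] \<Rightarrow> 0 | a # bs \<Rightarrow>
      pd a (T bs) x
      - (\<Sum>j<length bs. \<Sum>e\<in>UNIV. Gam a (bs ! j) e x * T (bs[j := e]) x)
      + w / (real CARD('n) + 1) * (\<Sum>e\<in>UNIV. Gam a e e x) * T bs x)"

definition scal :: "(real^'n::finite \<Rightarrow> real) \<Rightarrow> 'n list \<Rightarrow> real^'n \<Rightarrow> real" where
  "scal f = (\<lambda>_ x. f x)"

definition ten2 :: "('n::finite \<Rightarrow> 'n \<Rightarrow> real^'n \<Rightarrow> real) \<Rightarrow> 'n list \<Rightarrow> real^'n \<Rightarrow> real" where
  "ten2 P = (\<lambda>is x. P (is ! 0) (is ! 1) x)"

text \<open>Curvature: [nabla_a, nabla_b] v^c = Riem a b c d v^d.\<close>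
definition Riem :: "('n::finite \<Rightarrow> 'n \<Rightarrow> 'n \<Rightarrow> real^'n \<Rightarrow> real) \<Rightarrow> 'n \<Rightarrow> 'n \<Rightarrow> 'n \<Rightarrow> 'n \<Rightarrow> real^'n \<Rightarrow> real" where
  "Riem Gam a b c d x = pd a (Gam b d c) x - pd b (Gam a d c) x
     + (\<Sum>e\<in>UNIV. Gam a e c x * Gam b d e x) - (\<Sum>e\<in>UNIV. Gam b e c x * Gam a d e x)"

definition Ric :: "('n::finite \<Rightarrow> 'n \<Rightarrow> 'n \<Rightarrow> real^'n \<Rightarrow> real) \<Rightarrow> 'n \<Rightarrow> 'n \<Rightarrow> real^'n \<Rightarrow> real" where
  "Ric Gam b d x = (\<Sum>a\<in>UNIV. Riem Gam a b a d x)"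

text \<open>Projective Schouten tensor: the unique P with R = W + 2 delta P + beta delta,
  W totally trace-free, beta = -2 P_[ab]; explicitly P = Ric_(sym)/(n-1) + Ric_(alt)/(n+1).\<close>
definition Sch :: "('n::finite \<Rightarrow> 'n \<Rightarrow> 'n \<Rightarrow> real^'n \<Rightarrow> real) \<Rightarrow> 'n \<Rightarrow> 'n \<Rightarrow> real^'n \<Rightarrow> real" where
  "Sch Gam b d x = (Ric Gam b d x + Ric Gam d b x) / (2 * (real CARD('n) - 1))
                 + (Ric Gam b d x - Ric Gam d b x) / (2 * (real CARD('n) + 1))"

definition sym3 :: "('n \<Rightarrow> 'n \<Rightarrow> 'n \<Rightarrow> real) \<Rightarrow> 'n \<Rightarrow> 'n \<Rightarrow> 'n \<Rightarrow> real" where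
  "sym3 f a b c = (f a b c + f a c b + f b a c + f b c a + f c a b + f c b a) / 6"

definition D1 where "D1 Gam tau = cov Gam 2 (scal tau)"
definition D2 where "D2 Gam tau = cov Gam 2 (cov Gam 2 (scal tau))"
definition D3 where "D3 Gam tau = cov Gam 2 (cov Gam 2 (cov Gam 2 (scal tau)))"

definition third_order_eq :: "('n::finite \<Rightarrow> 'n \<Rightarrow> 'n \<Rightarrow> real^'n \<Rightarrow> real) \<Rightarrow> (real^'n) set
    \<Rightarrow> (real^'n \<Rightarrow> real) \<Rightarrow> bool" where
  "third_order_eq Gam U tau \<longleftrightarrow> (\<forall>x\<in>U. \<forall>a b c. sym3 (\<lambda>a b c.
       D3 Gam tau [a, b, c] x + 4 * Sch Gam a b x * D1 Gam tau [c] x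
       + 2 * tau x * cov Gam 0 (ten2 (Sch Gam)) [a, b, c] x) a b c = 0)"

definition kraw where
  "kraw Gam tau b c x = tau x * D2 Gam tau [b, c] x + 2 * Sch Gam b c x * (tau x)^2
      - 1/2 * D1 Gam tau [b] x * D1 Gam tau [c] x"

definition kten where
  "kten Gam tau = ten2 (\<lambda>b c x. (kraw Gam tau b c x + kraw Gam tau c b x) / 2)"

text \<open>Curve c on the interval I with velocity c', and weighted velocity
  u = s c' (x) eps^(-2) in T gamma(-2), nowhere vanishing, with u^b nabla_b u^a = 0,
  where u^b nabla_b = s D/dt and for a weight -2 vector field along the curve
  D/dt u^a = du^a/dt + Gamma^a_(be) c'^b u^e - 2/(n+1) Gamma^e_(be) c'^b u^a.\<close>
definition weighted_geod :: "('n::finite \<Rightarrow> 'n \<Rightarrow> 'n \<Rightarrow> real^'n \<Rightarrow> real) \<Rightarrow> (real^'n) set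
    \<Rightarrow> real set \<Rightarrow> (real \<Rightarrow> real^'n) \<Rightarrow> (real \<Rightarrow> real^'n) \<Rightarrow> (real \<Rightarrow> real)
    \<Rightarrow> (real \<Rightarrow> real^'n) \<Rightarrow> (real \<Rightarrow> real^'n) \<Rightarrow> bool" where
  "weighted_geod Gam U I c c' s u u' \<longleftrightarrow> (\<forall>t\<in>I.
      c t \<in> U \<and> (c has_vector_derivative c' t) (at t) \<and> c' t \<noteq> 0 \<and>
      s t \<noteq> 0 \<and> u t = s t *\<^sub>R c' t \<and> (u has_vector_derivative u' t) (at t) \<and>
      (\<forall>a. s t * (u' t $ a
                 + (\<Sum>b\<in>UNIV. \<Sum>e\<in>UNIV. Gam b e a (c t) * c' t $ b * u t $ e)
                 - 2 / (real CARD('n) + 1) * (\<Sum>b\<in>UNIV. \<Sum>e\<in>UNIV. Gam b e e (c t) * c' t $ b)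
                     * u t $ a) = 0))"

definition eta_formula where
  "eta_formula Gam tau x (uv :: real^'n::finite) =
     tau x * (\<Sum>a\<in>UNIV. \<Sum>b\<in>UNIV. uv $ a * uv $ b * D2 Gam tau [a, b] x)
     + 2 * (\<Sum>a\<in>UNIV. \<Sum>b\<in>UNIV. uv $ a * uv $ b * Sch Gam a b x) * (tau x)^2
     - 1/2 * (\<Sum>a\<in>UNIV. uv $ a * D1 Gam tau [a] x)^2"

text \<open>Tractor components in the splitting determined by nabla: index None stands for the
  Y_alpha (resp. X^alpha) slot, Some a for Z_alpha^a (resp. W^alpha_a).\<close>
definition Htr :: "('n::finite \<Rightarrow> 'n \<Rightarrow> 'n \<Rightarrow> real^'n \<Rightarrow> real) \<Rightarrow> (real^'n \<Rightarrow> real) \<Rightarrow> real^'n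
    \<Rightarrow> 'n option \<Rightarrow> 'n option \<Rightarrow> real" where
  "Htr Gam tau x i j = (case (i, j) of
       (None, None) \<Rightarrow> tau x
     | (None, Some c) \<Rightarrow> 1/2 * D1 Gam tau [c] x
     | (Some c, None) \<Rightarrow> 1/2 * D1 Gam tau [c] x
     | (Some a, Some b) \<Rightarrow> 1/2 * D2 Gam tau [a, b] x + Sch Gam a b x * tau x)"

definition Sig :: "real^'n::finite \<Rightarrow> 'n option \<Rightarrow> 'n option \<Rightarrow> real" where
  "Sig uv i j = (case (i, j) of
       (None, Some b) \<Rightarrow> uv $ b
     | (Some b, None) \<Rightarrow> - (uv $ b)
     | _ \<Rightarrow> 0)"

definition eta_tractor where
  "eta_tractor Gam tau x (uv :: real^'n::finite) =
     (\<Sum>i1\<in>UNIV. \<Sum>j1\<in>UNIV. \<Sum>i2\<in>UNIV. \<Sum>j2\<in>UNIV.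
        Sig uv i1 j1 * Sig uv i2 j2 * Htr Gam tau x i1 i2 * Htr Gam tau x j1 j2)"

end

theory Submission
  imports Defs
begin

lemma pd_has_derivative:
  assumes "(f has_derivative f') (at x)"
  shows "pd i f x = f' (axis i 1)"
    and "((\<lambda>t. f (x + t *\<^sub>R axis i 1)) has_real_derivative f' (axis i 1)) (at 0)"
proof -
  have lin: "linear f'" using assms has_derivative_linear by blast
  have l: "((\<lambda>t::real. x + t *\<^sub>R axis i 1) has_derivative (\<lambda>h. h *\<^sub>R axis i 1)) (at 0)"
    by (auto intro!: derivative_eq_intros)
  have f0: "(f has_derivative f') (at (x + 0 *\<^sub>R axis i 1))" using assms by simp
  have "((\<lambda>t. f (x + t *\<^sub>R axis i 1)) has_derivative (\<lambda>h. f' (h *\<^sub>R axis i 1))) (at 0)"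
    using diff_chain_at[OF l f0] by (simp add: o_def)
  moreover have "(\<lambda>h. f' (h *\<^sub>R axis i 1)) = (\<lambda>h. h * f' (axis i 1))"
    using lin by (simp add: linear_scale)
  moreover have "(\<lambda>h. h * f' (axis i 1)) = (*) (f' (axis i 1))" by (auto simp: fun_eq_iff)
  ultimately show D: "((\<lambda>t. f (x + t *\<^sub>R axis i 1)) has_real_derivative f' (axis i 1)) (at 0)"
    by (simp add: has_field_derivative_def)
  then show "pd i f x = f' (axis i 1)" unfolding pd_def by (rule DERIV_imp_deriv)
qed

lemma pd_deriv:
  assumes "f differentiable (at x)"
  shows "((\<lambda>t. f (x + t *\<^sub>R axis i 1)) has_real_derivative pd i f x) (at 0)"
proof -
  obtain f' where "(f has_derivative f') (at x)" using assms differentiable_def by blast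
  then show ?thesis using pd_has_derivative[of f f' x i] by simp
qed

lemma pd_local:
  assumes "open U" "x \<in> U" "\<And>y. y \<in> U \<Longrightarrow> f y = g y"
  shows "pd i f x = pd i g x"
proof -
  have o: "open ((\<lambda>t::real. x + t *\<^sub>R axis i 1) -` U)"
    by (rule continuous_open_vimage) (auto intro!: continuous_intros assms(1))
  have "\<forall>\<^sub>F t in nhds 0. t \<in> (\<lambda>t::real. x + t *\<^sub>R axis i 1) -` U"
    by (rule eventually_nhds_in_open[OF o]) (simp add: assms(2))
  then have "\<forall>\<^sub>F t in nhds 0. (x + t *\<^sub>R axis i 1) \<in> U" by simp
  then have "\<forall>\<^sub>F t in nhds 0. f (x + t *\<^sub>R axis i 1) = g (x + t *\<^sub>R axis i 1)"
    by (rule eventually_mono) (simp add: assms(3))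
  then show ?thesis unfolding pd_def by (rule deriv_cong_ev) simp
qed

lemma pd_add:
  assumes "f differentiable (at x)" "g differentiable (at x)"
  shows "pd i (\<lambda>y. f y + g y) x = pd i f x + pd i g x"
  unfolding pd_def[of i "\<lambda>y. f y + g y"]
  by (rule DERIV_imp_deriv, rule DERIV_add, rule pd_deriv[OF assms(1)], rule pd_deriv[OF assms(2)])

lemma pd_diff:
  assumes "f differentiable (at x)" "g differentiable (at x)"
  shows "pd i (\<lambda>y. f y - g y) x = pd i f x - pd i g x"
  unfolding pd_def[of i "\<lambda>y. f y - g y"]
  by (rule DERIV_imp_deriv, rule DERIV_diff, rule pd_deriv[OF assms(1)], rule pd_deriv[OF assms(2)])

lemma pd_mult:
  assumes "f differentiable (at x)" "g differentiable (at x)"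
  shows "pd i (\<lambda>y. f y * g y) x = pd i f x * g x + f x * pd i g x"
proof -
  have "((\<lambda>t. f (x + t *\<^sub>R axis i 1) * g (x + t *\<^sub>R axis i 1)) has_real_derivative
     pd i f x * g (x + 0 *\<^sub>R axis i 1) + pd i g x * f (x + 0 *\<^sub>R axis i 1)) (at 0)"
    using DERIV_mult[OF pd_deriv[OF assms(1)] pd_deriv[OF assms(2)]] by simp
  then show ?thesis unfolding pd_def[of i "\<lambda>y. f y * g y"]
    by (simp add: DERIV_imp_deriv pd_def mult.commute)
qed

lemma pd_const: "pd i (\<lambda>y. c) x = 0"
  unfolding pd_def by simp

lemma pd_cmult:
  assumes "f differentiable (at x)"
  shows "pd i (\<lambda>y. c * f y) x = c * pd i f x"
  using pd_mult[of "\<lambda>y. c" x f i] assms by (simp add: pd_const)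

lemma pd_sum:
  assumes "finite S" "\<And>k. k \<in> S \<Longrightarrow> f k differentiable (at x)"
  shows "pd i (\<lambda>y. \<Sum>k\<in>S. f k y) x = (\<Sum>k\<in>S. pd i (f k) x)"
  using assms
proof (induction S rule: finite_induct)
  case empty then show ?case by (simp add: pd_const)
next
  case (insert a S)
  have "pd i (\<lambda>y. \<Sum>k\<in>insert a S. f k y) x = pd i (\<lambda>y. f a y + (\<Sum>k\<in>S. f k y)) x"
    using insert by simp
  also have "\<dots> = pd i (f a) x + pd i (\<lambda>y. \<Sum>k\<in>S. f k y) x"
    by (rule pd_add) (use insert in \<open>auto intro!: differentiable_sum\<close>)
  finally show ?case using insert by simp
qed


lemma iter_pd_Cons: "iter_pd (i # is) f = pd i (iter_pd is f)"
  by (simp add: iter_pd_def)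

lemma iter_pd_Nil: "iter_pd [] f = f"
  by (simp add: iter_pd_def)

lemma iter_pd_snoc: "iter_pd (is @ [i]) f = iter_pd is (pd i f)"
  by (simp add: iter_pd_def)

lemma diff_on_at: "open U \<Longrightarrow> f differentiable_on U \<Longrightarrow> x \<in> U \<Longrightarrow> f differentiable (at x)"
  using differentiable_on_eq_differentiable_at by blast

lemma sm_at: "open U \<Longrightarrow> smooth_on_open U f \<Longrightarrow> x \<in> U \<Longrightarrow> f differentiable (at x)"
proof -
  assume a: "open U" "smooth_on_open U f" "x \<in> U"
  have "iter_pd [] f differentiable_on U" using a unfolding smooth_on_open_def by blast
  then show ?thesis using diff_on_at[OF a(1) _ a(3)] by (simp add: iter_pd_Nil)
qed

lemma sm_pd: "smooth_on_open U f \<Longrightarrow> smooth_on_open U (pd i f)"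
  unfolding smooth_on_open_def by (metis iter_pd_snoc)

lemma iter_pd_local:
  assumes "open U" "\<And>y. y \<in> U \<Longrightarrow> f y = g y" "x \<in> U"
  shows "iter_pd is f x = iter_pd is g x"
  using assms(3)
proof (induction "is" arbitrary: x)
  case Nil then show ?case using assms by (simp add: iter_pd_Nil)
next
  case (Cons i js) then show ?case
    unfolding iter_pd_Cons by (intro pd_local[OF assms(1)]) auto
qed

lemma diff_on_cong:
  assumes "open U" "f differentiable_on U" "\<And>y. y \<in> U \<Longrightarrow> f y = g y"
  shows "g differentiable_on U"
proof -
  have "g differentiable (at x)" if xU: "x \<in> U" for x
  proof -
    obtain f' where "(f has_derivative f') (at x)" using diff_on_at[OF assms(1,2) xU]
      differentiable_def by blast
    then have "(g has_derivative f') (at x)"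
      by (rule has_derivative_transform_within_open[OF _ assms(1) xU assms(3)])
    then show ?thesis using differentiable_def by blast
  qed
  then show ?thesis using assms(1) differentiable_on_eq_differentiable_at by blast
qed

lemma sm_cong:
  assumes "open U" "smooth_on_open U f" "\<And>y. y \<in> U \<Longrightarrow> f y = g y"
  shows "smooth_on_open U g"
  unfolding smooth_on_open_def
proof
  fix "is"
  have "iter_pd is f differentiable_on U" using assms(2) unfolding smooth_on_open_def by blast
  then show "iter_pd is g differentiable_on U"
    by (rule diff_on_cong[OF assms(1)]) (rule iter_pd_local[OF assms(1) assms(3)])
qed

lemma iter_pd_add:
  assumes "open U" "\<And>k. iter_pd (drop k is) A differentiable_on U"
    "\<And>k. iter_pd (drop k is) B differentiable_on U" "x \<in> U"
  shows "iter_pd is (\<lambda>y. A y + B y) x = iter_pd is A x + iter_pd is B x"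
  using assms(2-4)
proof (induction "is" arbitrary: x)
  case Nil then show ?case by (simp add: iter_pd_Nil)
next
  case (Cons i js)
  have dA: "\<And>k. iter_pd (drop k js) A differentiable_on U"
    using Cons.prems(1)[of "Suc _"] by simp
  have dB: "\<And>k. iter_pd (drop k js) B differentiable_on U"
    using Cons.prems(2)[of "Suc _"] by simp
  have "iter_pd (i # js) (\<lambda>y. A y + B y) x = pd i (\<lambda>y. iter_pd js A y + iter_pd js B y) x"
    unfolding iter_pd_Cons
    by (rule pd_local[OF assms(1) Cons.prems(3)]) (rule Cons.IH[OF dA dB])
  also have "\<dots> = iter_pd (i # js) A x + iter_pd (i # js) B x"
    unfolding iter_pd_Cons
    by (rule pd_add; rule diff_on_at[OF assms(1) _ Cons.prems(3)])
       (use dA[of 0] dB[of 0] in auto)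
  finally show ?case .
qed

lemma sm_add:
  assumes "open U" "smooth_on_open U f" "smooth_on_open U g"
  shows "smooth_on_open U (\<lambda>y. f y + g y)"
  unfolding smooth_on_open_def
proof
  fix "is"
  have "iter_pd is f differentiable_on U" "iter_pd is g differentiable_on U"
    using assms unfolding smooth_on_open_def by auto
  then have "(\<lambda>y. iter_pd is f y + iter_pd is g y) differentiable_on U" by auto
  then show "iter_pd is (\<lambda>y. f y + g y) differentiable_on U"
    by (rule diff_on_cong[OF assms(1)])
      (rule iter_pd_add[symmetric, OF assms(1)], use assms in \<open>auto simp: smooth_on_open_def\<close>)
qed

lemma iter_pd_const: "iter_pd is (\<lambda>y. c) = (\<lambda>y. if is = [] then c else 0)"
proof (induction "is")
  case Nil then show ?case by (simp add: iter_pd_Nil)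
next
  case (Cons i js) then show ?case by (auto simp: iter_pd_Cons pd_const)
qed

lemma sm_const: "smooth_on_open U (\<lambda>y. c)"
  unfolding smooth_on_open_def iter_pd_const by auto

lemma sm_mult_aux:
  assumes "open U"
  shows "\<forall>js f g. length js \<le> n \<longrightarrow> smooth_on_open U f \<longrightarrow> smooth_on_open U g \<longrightarrow>
           iter_pd js (\<lambda>y. f y * g y) differentiable_on U"
proof (induction n)
  case 0
  show ?case
  proof (intro allI impI)
    fix js :: "'a list" and f g
    assume "length js \<le> 0" "smooth_on_open U f" "smooth_on_open U g"
    then have "js = []" "f differentiable_on U" "g differentiable_on U"
      unfolding smooth_on_open_def using iter_pd_Nil[of f] iter_pd_Nil[of g] by (simp, metis, metis)
    then show "iter_pd js (\<lambda>y. f y * g y) differentiable_on U"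
      by (simp add: iter_pd_Nil differentiable_on_mult)
  qed
next
  case (Suc n)
  show ?case
  proof (intro allI impI)
    fix js :: "'a list" and f g
    assume L: "length js \<le> Suc n" and sf: "smooth_on_open U f" and sg: "smooth_on_open U g"
    show "iter_pd js (\<lambda>y. f y * g y) differentiable_on U"
    proof (cases "length js \<le> n")
      case True then show ?thesis using Suc.IH sf sg by blast
    next
      case False
      then have ne: "js \<noteq> []" by auto
      define ks where "ks = butlast js"
      define i where "i = last js"
      have js: "js = ks @ [i]" using ne unfolding ks_def i_def by simp
      have lk: "length ks \<le> n" using L unfolding ks_def by simp
      define A where "A = (\<lambda>y. pd i f y * g y)"
      define B where "B = (\<lambda>y. f y * pd i g y)"
      have sA: "iter_pd (drop k ks) A differentiable_on U" for k
      proof -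
        have "length (drop k ks) \<le> n" using lk by simp
        then show ?thesis unfolding A_def using Suc.IH sm_pd[OF sf] sg by blast
      qed
      have sB: "iter_pd (drop k ks) B differentiable_on U" for k
      proof -
        have "length (drop k ks) \<le> n" using lk by simp
        then show ?thesis unfolding B_def using Suc.IH sf sm_pd[OF sg] by blast
      qed
      have e1: "iter_pd ks (pd i (\<lambda>y. f y * g y)) y = iter_pd ks (\<lambda>y. A y + B y) y" if "y \<in> U" for y
        by (rule iter_pd_local[OF assms _ that])
          (simp add: A_def B_def pd_mult sm_at[OF assms sf] sm_at[OF assms sg])
      have e2: "iter_pd ks (\<lambda>y. A y + B y) y = iter_pd ks A y + iter_pd ks B y" if "y \<in> U" for y
        by (rule iter_pd_add[OF assms sA sB that])
      have "(\<lambda>y. iter_pd ks A y + iter_pd ks B y) differentiable_on U"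
        using sA[of 0] sB[of 0] by auto
      then show ?thesis unfolding js iter_pd_snoc
        by (rule diff_on_cong[OF assms]) (simp add: e1 e2)
    qed
  qed
qed

lemma sm_mult:
  assumes "open U" "smooth_on_open U f" "smooth_on_open U g"
  shows "smooth_on_open U (\<lambda>y. f y * g y)"
  unfolding smooth_on_open_def using sm_mult_aux[OF assms(1)] assms(2,3) by blast

lemma sm_diff:
  assumes "open U" "smooth_on_open U f" "smooth_on_open U g"
  shows "smooth_on_open U (\<lambda>y. f y - g y)"
proof -
  have "smooth_on_open U (\<lambda>y. f y + (-1) * g y)"
    by (intro sm_add sm_mult sm_const assms)
  then show ?thesis by simp
qed

lemma sm_sum:
  assumes "open U" "finite S" "\<And>k. k \<in> S \<Longrightarrow> smooth_on_open U (f k)"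
  shows "smooth_on_open U (\<lambda>y. \<Sum>k\<in>S. f k y)"
  using assms(2,3)
proof (induction S rule: finite_induct)
  case empty then show ?case by (simp add: sm_const)
next
  case (insert a S) then show ?case by (simp add: sm_add[OF assms(1)])
qed


lemma sm_divc: "open U \<Longrightarrow> smooth_on_open U f \<Longrightarrow> smooth_on_open U (\<lambda>y. f y / k)"
  using sm_mult[of U f "\<lambda>y. inverse k"] sm_const[of U "inverse k"] by (simp add: divide_inverse)

lemma sm_pow2: "open U \<Longrightarrow> smooth_on_open U f \<Longrightarrow> smooth_on_open U (\<lambda>y. (f y)^2)"
  using sm_mult[of U f f] by (simp add: power2_eq_square)

lemmas sm_intros = sm_add sm_diff sm_mult sm_const sm_divc sm_pow2 sm_sum sm_pd

lemma cov1: "cov Gam w T [a] x = pd a (T []) x + w / (real CARD('n) + 1) * (\<Sum>e\<in>UNIV. Gam a e e x) * T [] x"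
  for Gam :: "'n::finite \<Rightarrow> 'n \<Rightarrow> 'n \<Rightarrow> real^'n \<Rightarrow> real"
  by (simp add: cov_def)

lemma cov2: "cov Gam w T [a, b] x = pd a (T [b]) x - (\<Sum>e\<in>UNIV. Gam a b e x * T [e] x)
   + w / (real CARD('n) + 1) * (\<Sum>e\<in>UNIV. Gam a e e x) * T [b] x"
  for Gam :: "'n::finite \<Rightarrow> 'n \<Rightarrow> 'n \<Rightarrow> real^'n \<Rightarrow> real"
  by (simp add: cov_def)

lemma cov3: "cov Gam w T [a, b, c] x = pd a (T [b, c]) x - (\<Sum>e\<in>UNIV. Gam a b e x * T [e, c] x)
   - (\<Sum>e\<in>UNIV. Gam a c e x * T [b, e] x)
   + w / (real CARD('n) + 1) * (\<Sum>e\<in>UNIV. Gam a e e x) * T [b, c] x"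
  for Gam :: "'n::finite \<Rightarrow> 'n \<Rightarrow> 'n \<Rightarrow> real^'n \<Rightarrow> real"
  by (simp add: cov_def numeral_2_eq_2 lessThan_Suc algebra_simps)

lemma D1_eq: "D1 Gam tau [b] x = pd b tau x + 2 / (real CARD('n) + 1) * (\<Sum>e\<in>UNIV. Gam b e e x) * tau x"
  for Gam :: "'n::finite \<Rightarrow> 'n \<Rightarrow> 'n \<Rightarrow> real^'n \<Rightarrow> real"
  unfolding D1_def cov1 by (simp add: scal_def)

lemma D2_eq: "D2 Gam tau [a, b] x = pd a (\<lambda>y. D1 Gam tau [b] y) x - (\<Sum>e\<in>UNIV. Gam a b e x * D1 Gam tau [e] x)
   + 2 / (real CARD('n) + 1) * (\<Sum>e\<in>UNIV. Gam a e e x) * D1 Gam tau [b] x"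
  for Gam :: "'n::finite \<Rightarrow> 'n \<Rightarrow> 'n \<Rightarrow> real^'n \<Rightarrow> real"
  unfolding D2_def cov2 D1_def by simp

lemma D3_eq: "D3 Gam tau [a, b, c] x = pd a (\<lambda>y. D2 Gam tau [b, c] y) x
   - (\<Sum>e\<in>UNIV. Gam a b e x * D2 Gam tau [e, c] x)
   - (\<Sum>e\<in>UNIV. Gam a c e x * D2 Gam tau [b, e] x)
   + 2 / (real CARD('n) + 1) * (\<Sum>e\<in>UNIV. Gam a e e x) * D2 Gam tau [b, c] x"
  for Gam :: "'n::finite \<Rightarrow> 'n \<Rightarrow> 'n \<Rightarrow> real^'n \<Rightarrow> real"
  unfolding D3_def cov3 D2_def by simp

lemma C_eq: "cov Gam 0 (ten2 (Sch Gam)) [a, b, c] x = pd a (Sch Gam b c) x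
   - (\<Sum>e\<in>UNIV. Gam a b e x * Sch Gam e c x)
   - (\<Sum>e\<in>UNIV. Gam a c e x * Sch Gam b e x)"
  for Gam :: "'n::finite \<Rightarrow> 'n \<Rightarrow> 'n \<Rightarrow> real^'n \<Rightarrow> real"
  unfolding cov3 by (simp add: ten2_def)

lemma hlp_half: "(p1+p2)/2 - (a+b)/2 - (c+d)/2 + z*g*((k1+k2)/2)
   = ((p1 - a - c + z*g*k1) + (p2 - d - b + z*g*k2))/(2::real)"
  by (simp add: field_simps)

lemma K_eq: "cov Gam 4 (kten Gam tau) [a, b, c] x =
   (cov Gam 4 (ten2 (kraw Gam tau)) [a, b, c] x + cov Gam 4 (ten2 (kraw Gam tau)) [a, c, b] x) / 2"
  if "open U" "x \<in> U" "\<And>b c. smooth_on_open U (kraw Gam tau b c)"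
  for Gam :: "'n::finite \<Rightarrow> 'n \<Rightarrow> 'n \<Rightarrow> real^'n \<Rightarrow> real"
proof -
  have kt: "kten Gam tau [p, q] = (\<lambda>y. (kraw Gam tau p q y + kraw Gam tau q p y) / 2)" for p q
    by (simp add: kten_def ten2_def)
  have kr: "ten2 (kraw Gam tau) [p, q] = kraw Gam tau p q" for p q
    by (simp add: ten2_def)
  have P: "pd a (\<lambda>y. (kraw Gam tau b c y + kraw Gam tau c b y) / 2) x
      = (pd a (kraw Gam tau b c) x + pd a (kraw Gam tau c b) x) / 2"
    using pd_cmult[of "\<lambda>y. kraw Gam tau b c y + kraw Gam tau c b y" x a "1/2"]
      pd_add[of "kraw Gam tau b c" x "kraw Gam tau c b" a]
      sm_at[OF that(1) that(3) that(2)] sm_at[OF that(1) that(3) that(2)]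
    by (simp add: differentiable_add)
  have half: "(\<Sum>e\<in>UNIV. g e * ((p e + q e) / 2)) = ((\<Sum>e\<in>UNIV. g e * p e) + (\<Sum>e\<in>UNIV. g e * q e)) / 2"
    for g p q :: "'n \<Rightarrow> real"
    unfolding sum.distrib[symmetric] sum_divide_distrib
    by (rule sum.cong) (auto simp: algebra_simps add_divide_distrib)
  show ?thesis unfolding cov3 kt kr P half
    by (rule hlp_half)
qed


lemma deriv_poly:
  assumes "(f has_real_derivative f') (at 0)" "(g has_real_derivative g') (at 0)"
    "(s has_real_derivative s') (at 0)" "(h1 has_real_derivative h1') (at 0)"
    "(h2 has_real_derivative h2') (at 0)"
  shows "((\<lambda>t. f t * g t + 2 * s t * (f t)^2 - 1/2 * h1 t * h2 t) has_real_derivative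
     (f' * g 0 + f 0 * g' + 2 * s' * (f 0)^2 + 2 * s 0 * (2 * f 0 * f') - 1/2 * (h1' * h2 0 + h1 0 * h2'))) (at 0)"
  using assms by (auto intro!: derivative_eq_intros simp: algebra_simps)

context
  fixes Gam :: "'n::finite \<Rightarrow> 'n \<Rightarrow> 'n \<Rightarrow> real^'n \<Rightarrow> real" and U tau
  assumes oU: "open U" and sGam: "\<And>i j k. smooth_on_open U (Gam i j k)"
    and stau: "smooth_on_open U tau"
begin

lemma sm_G: "smooth_on_open U (\<lambda>y. \<Sum>e\<in>UNIV. Gam a e e y)"
  by (intro sm_sum oU sGam) auto

lemma sm_D1: "smooth_on_open U (D1 Gam tau [b])"
proof -
  have "D1 Gam tau [b] = (\<lambda>y. pd b tau y + 2 / (real CARD('n) + 1) * (\<Sum>e\<in>UNIV. Gam b e e y) * tau y)"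
    by (rule ext, rule D1_eq)
  then show ?thesis by (simp only:) (intro sm_intros oU stau sm_G)
qed

lemma sm_D2: "smooth_on_open U (D2 Gam tau [a, b])"
proof -
  have "D2 Gam tau [a, b] = (\<lambda>y. pd a (\<lambda>y. D1 Gam tau [b] y) y - (\<Sum>e\<in>UNIV. Gam a b e y * D1 Gam tau [e] y)
   + 2 / (real CARD('n) + 1) * (\<Sum>e\<in>UNIV. Gam a e e y) * D1 Gam tau [b] y)"
    by (rule ext, rule D2_eq)
  then show ?thesis by (simp only:) (intro sm_intros oU sm_D1 sm_G sGam; simp)
qed

lemma sm_Sch: "smooth_on_open U (Sch Gam b c)"
  unfolding Sch_def[abs_def] Ric_def[abs_def] Riem_def[abs_def]
  by (intro sm_intros oU sGam; simp)

lemma sm_kraw: "smooth_on_open U (kraw Gam tau b c)"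
  unfolding kraw_def[abs_def]
  by (intro sm_intros oU stau sm_D1 sm_D2 sm_Sch)

lemma pd_kraw:
  assumes "x \<in> U"
  shows "pd a (kraw Gam tau b c) x = pd a tau x * D2 Gam tau [b, c] x + tau x * pd a (D2 Gam tau [b, c]) x
    + 2 * pd a (Sch Gam b c) x * (tau x)^2 + 2 * Sch Gam b c x * (2 * tau x * pd a tau x)
    - 1/2 * (pd a (D1 Gam tau [b]) x * D1 Gam tau [c] x + D1 Gam tau [b] x * pd a (D1 Gam tau [c]) x)"
proof -
  have "((\<lambda>t. kraw Gam tau b c (x + t *\<^sub>R axis a 1)) has_real_derivative
     (pd a tau x * D2 Gam tau [b, c] (x + 0 *\<^sub>R axis a 1) + tau (x + 0 *\<^sub>R axis a 1) * pd a (D2 Gam tau [b, c]) x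
    + 2 * pd a (Sch Gam b c) x * (tau (x + 0 *\<^sub>R axis a 1))^2 + 2 * Sch Gam b c (x + 0 *\<^sub>R axis a 1) * (2 * tau (x + 0 *\<^sub>R axis a 1) * pd a tau x)
    - 1/2 * (pd a (D1 Gam tau [b]) x * D1 Gam tau [c] (x + 0 *\<^sub>R axis a 1) + D1 Gam tau [b] (x + 0 *\<^sub>R axis a 1) * pd a (D1 Gam tau [c]) x))) (at 0)"
    unfolding kraw_def
    by (rule deriv_poly; rule pd_deriv; rule sm_at[OF oU _ assms])
      (rule stau sm_D1 sm_D2 sm_Sch)+
  then show ?thesis unfolding pd_def[of a "kraw Gam tau b c"]
    by (subst DERIV_imp_deriv) (auto simp: pd_def)
qed

end


lemma alg_CK:
  fixes pt pb pc pD pS K1 K2 kbc d1a d1b d1c d2ab d2ac d2bc d3 C S t z g u1 u2 vb vc q1 q2 :: real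
  assumes "pt = d1a - 2 * z * g * t" "pb = d2ab + vb - 2 * z * g * d1b" "pc = d2ac + vc - 2 * z * g * d1c"
    "pD = d3 + u1 + u2 - 2 * z * g * d2bc" "pS = C + q1 + q2"
    "K1 = t * u1 + 2 * t^2 * q1 - 1/2 * vb * d1c" "K2 = t * u2 + 2 * t^2 * q2 - 1/2 * d1b * vc"
    "kbc = t * d2bc + 2 * S * t^2 - 1/2 * d1b * d1c"
  shows "(pt * d2bc + t * pD + 2 * pS * t^2 + 2 * S * (2 * t * pt) - 1/2 * (pb * d1c + d1b * pc)) - K1 - K2 + 4 * z * g * kbc
     = d1a * d2bc + t * d3 + 2 * C * t^2 + 4 * S * t * d1a - 1/2 * (d2ab * d1c + d1b * d2ac)"
  unfolding assms by (simp add: algebra_simps power2_eq_square)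

lemma sym3_half: "sym3 (\<lambda>a b c. (P a b c + P a c b) / 2) a b c = sym3 P a b c"
  by (simp add: sym3_def field_simps)

lemma sym3_P:
  fixes p :: "'n \<Rightarrow> real"
  shows "sym3 (\<lambda>a b c. p a * q b c + t * r a b c + 2 * C a b c * t^2 + 4 * S b c * t * p a
      - 1/2 * (q a b * p c + p b * q a c)) a b c
   = t * sym3 (\<lambda>a b c. r a b c + 4 * S a b * p c + 2 * t * C a b c) a b c"
  by (simp add: sym3_def field_simps power2_eq_square)

lemma sum_lin3:
  fixes g p q r :: "'n::finite \<Rightarrow> real"
  shows "(\<Sum>e\<in>UNIV. g e * (t * p e + 2 * q e * t^2 - 1/2 * r e * w))
    = t * (\<Sum>e\<in>UNIV. g e * p e) + 2 * t^2 * (\<Sum>e\<in>UNIV. g e * q e) - 1/2 * (\<Sum>e\<in>UNIV. g e * r e) * w"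
  by (simp add: sum_distrib_left sum_distrib_right sum.distrib sum_subtractf algebra_simps)

lemma sum_lin3':
  fixes g p q r :: "'n::finite \<Rightarrow> real"
  shows "(\<Sum>e\<in>UNIV. g e * (t * p e + 2 * q e * t^2 - 1/2 * w * r e))
    = t * (\<Sum>e\<in>UNIV. g e * p e) + 2 * t^2 * (\<Sum>e\<in>UNIV. g e * q e) - 1/2 * w * (\<Sum>e\<in>UNIV. g e * r e)"
  by (simp add: sum_distrib_left sum_distrib_right sum.distrib sum_subtractf algebra_simps)

context
  fixes Gam :: "'n::finite \<Rightarrow> 'n \<Rightarrow> 'n \<Rightarrow> real^'n \<Rightarrow> real" and U tau
  assumes oU: "open U" and sGam: "\<And>i j k. smooth_on_open U (Gam i j k)"
    and stau: "smooth_on_open U tau"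
begin

lemma CK_eq:
  assumes "x \<in> U"
  shows "cov Gam 4 (ten2 (kraw Gam tau)) [a, b, c] x =
     D1 Gam tau [a] x * D2 Gam tau [b, c] x + tau x * D3 Gam tau [a, b, c] x
     + 2 * cov Gam 0 (ten2 (Sch Gam)) [a, b, c] x * (tau x)^2
     + 4 * Sch Gam b c x * tau x * D1 Gam tau [a] x
     - 1/2 * (D2 Gam tau [a, b] x * D1 Gam tau [c] x + D1 Gam tau [b] x * D2 Gam tau [a, c] x)"
proof -
  define z where "z = 1 / (real CARD('n) + 1)"
  define g where "g = (\<Sum>e\<in>UNIV. Gam a e e x)"
  have z2: "2 / (real CARD('n) + 1) = 2 * z" and z4: "4 / (real CARD('n) + 1) = 4 * z"
    unfolding z_def by simp_all
  have kr: "ten2 (kraw Gam tau) [p, q] = kraw Gam tau p q" for p q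
    by (simp add: ten2_def)
  have k1: "kraw Gam tau p q x = tau x * D2 Gam tau [p, q] x + 2 * Sch Gam p q x * (tau x)^2
      - 1/2 * D1 Gam tau [p] x * D1 Gam tau [q] x" for p q
    by (simp add: kraw_def)
  have L: "cov Gam 4 (ten2 (kraw Gam tau)) [a, b, c] x = pd a (kraw Gam tau b c) x
     - (\<Sum>e\<in>UNIV. Gam a b e x * kraw Gam tau e c x) - (\<Sum>e\<in>UNIV. Gam a c e x * kraw Gam tau b e x)
     + 4 * z * g * kraw Gam tau b c x"
    by (simp add: cov3 kr z4 g_def)
  have h1: "pd a tau x = D1 Gam tau [a] x - 2 * z * g * tau x"
    by (simp add: D1_eq z2 g_def)
  have h2: "pd a (D1 Gam tau [p]) x = D2 Gam tau [a, p] x + (\<Sum>e\<in>UNIV. Gam a p e x * D1 Gam tau [e] x)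
      - 2 * z * g * D1 Gam tau [p] x" for p
    by (simp add: D2_eq z2 g_def)
  have h4: "pd a (D2 Gam tau [b, c]) x = D3 Gam tau [a, b, c] x + (\<Sum>e\<in>UNIV. Gam a b e x * D2 Gam tau [e, c] x)
      + (\<Sum>e\<in>UNIV. Gam a c e x * D2 Gam tau [b, e] x) - 2 * z * g * D2 Gam tau [b, c] x"
    by (simp add: D3_eq z2 g_def)
  have h5: "pd a (Sch Gam b c) x = cov Gam 0 (ten2 (Sch Gam)) [a, b, c] x + (\<Sum>e\<in>UNIV. Gam a b e x * Sch Gam e c x)
      + (\<Sum>e\<in>UNIV. Gam a c e x * Sch Gam b e x)"
    by (simp add: C_eq)
  have h6: "(\<Sum>e\<in>UNIV. Gam a b e x * kraw Gam tau e c x) = tau x * (\<Sum>e\<in>UNIV. Gam a b e x * D2 Gam tau [e, c] x)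
      + 2 * (tau x)^2 * (\<Sum>e\<in>UNIV. Gam a b e x * Sch Gam e c x)
      - 1/2 * (\<Sum>e\<in>UNIV. Gam a b e x * D1 Gam tau [e] x) * D1 Gam tau [c] x"
    unfolding k1 by (rule sum_lin3)
  have h7: "(\<Sum>e\<in>UNIV. Gam a c e x * kraw Gam tau b e x) = tau x * (\<Sum>e\<in>UNIV. Gam a c e x * D2 Gam tau [b, e] x)
      + 2 * (tau x)^2 * (\<Sum>e\<in>UNIV. Gam a c e x * Sch Gam b e x)
      - 1/2 * D1 Gam tau [b] x * (\<Sum>e\<in>UNIV. Gam a c e x * D1 Gam tau [e] x)"
    unfolding k1 by (rule sum_lin3')
  show ?thesis
    unfolding L pd_kraw[OF oU sGam stau assms]
    by (rule alg_CK[OF h1 h2 h2 h4 h5 h6 h7 k1])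
qed

end


lemma sw3a: "(\<Sum>x\<in>A. \<Sum>y\<in>B. \<Sum>z\<in>C. f x y z) = (\<Sum>y\<in>B. \<Sum>z\<in>C. \<Sum>x\<in>A. f x y z)"
proof -
  have "(\<Sum>x\<in>A. \<Sum>y\<in>B. \<Sum>z\<in>C. f x y z) = (\<Sum>y\<in>B. \<Sum>x\<in>A. \<Sum>z\<in>C. f x y z)"
    by (rule sum.swap)
  also have "\<dots> = (\<Sum>y\<in>B. \<Sum>z\<in>C. \<Sum>x\<in>A. f x y z)"
    by (rule sum.cong[OF refl], rule sum.swap)
  finally show ?thesis .
qed

lemma sw3b: "(\<Sum>x\<in>A. \<Sum>y\<in>B. \<Sum>z\<in>C. f x y z) = (\<Sum>x\<in>A. \<Sum>z\<in>C. \<Sum>y\<in>B. f x y z)"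
  by (rule sum.cong[OF refl], rule sum.swap)

lemma P1:
  fixes u :: "'n::finite \<Rightarrow> real"
  shows "(\<Sum>b\<in>UNIV. \<Sum>c\<in>UNIV. u b * u c * (\<Sum>a\<in>UNIV. u a * dK a b c))
       = (\<Sum>a\<in>UNIV. \<Sum>b\<in>UNIV. \<Sum>c\<in>UNIV. u a * u b * u c * dK a b c)"
  by (subst sw3a) (simp add: sum_distrib_left algebra_simps)

lemma P2:
  fixes u w G :: "'n::finite \<Rightarrow> real"
  assumes w: "\<And>b. w b = - (\<Sum>a\<in>UNIV. \<Sum>e\<in>UNIV. Gm a e b * u a * u e) + 2 * z * (\<Sum>a\<in>UNIV. G a * u a) * u b"
  shows "(\<Sum>b\<in>UNIV. \<Sum>c\<in>UNIV. w b * u c * K b c)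
     = - (\<Sum>a\<in>UNIV. \<Sum>b\<in>UNIV. \<Sum>c\<in>UNIV. u a * u b * u c * (\<Sum>e\<in>UNIV. Gm a b e * K e c))
       + 2 * z * (\<Sum>a\<in>UNIV. G a * u a) * (\<Sum>b\<in>UNIV. \<Sum>c\<in>UNIV. u b * u c * K b c)"
proof -
  define V where "V e = (\<Sum>c\<in>UNIV. u c * K e c)" for e
  have l: "(\<Sum>b\<in>UNIV. \<Sum>c\<in>UNIV. w b * u c * K b c) = (\<Sum>b\<in>UNIV. w b * V b)"
    by (simp add: V_def sum_distrib_left algebra_simps)
  have r: "(\<Sum>a\<in>UNIV. \<Sum>b\<in>UNIV. \<Sum>c\<in>UNIV. u a * u b * u c * (\<Sum>e\<in>UNIV. Gm a b e * K e c))
     = (\<Sum>a\<in>UNIV. \<Sum>b\<in>UNIV. \<Sum>e\<in>UNIV. u a * u b * Gm a b e * V e)"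
  proof -
    have "(\<Sum>c\<in>UNIV. u a * u b * u c * (\<Sum>e\<in>UNIV. Gm a b e * K e c)) = (\<Sum>e\<in>UNIV. u a * u b * Gm a b e * V e)" for a b
      unfolding V_def sum_distrib_left by (subst sum.swap) (simp add: algebra_simps)
    then show ?thesis by (simp only:)
  qed
  have m: "(\<Sum>b\<in>UNIV. (\<Sum>a\<in>UNIV. \<Sum>e\<in>UNIV. Gm a e b * u a * u e) * V b)
      = (\<Sum>a\<in>UNIV. \<Sum>b\<in>UNIV. \<Sum>e\<in>UNIV. u a * u b * Gm a b e * V e)"
    by (simp add: sum_distrib_right) (subst sw3a, simp add: algebra_simps)
  have q: "(\<Sum>b\<in>UNIV. u b * V b) = (\<Sum>b\<in>UNIV. \<Sum>c\<in>UNIV. u b * u c * K b c)"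
    by (simp add: V_def sum_distrib_left algebra_simps)
  have "(\<Sum>b\<in>UNIV. w b * V b) = - (\<Sum>b\<in>UNIV. (\<Sum>a\<in>UNIV. \<Sum>e\<in>UNIV. Gm a e b * u a * u e) * V b)
      + 2 * z * (\<Sum>a\<in>UNIV. G a * u a) * (\<Sum>b\<in>UNIV. u b * V b)"
  proof -
    have "(\<Sum>b\<in>UNIV. w b * V b) = (\<Sum>b\<in>UNIV. - ((\<Sum>a\<in>UNIV. \<Sum>e\<in>UNIV. Gm a e b * u a * u e) * V b)
       + (2 * z * (\<Sum>a\<in>UNIV. G a * u a)) * (u b * V b))"
      by (rule sum.cong) (simp_all add: w algebra_simps)
    also have "\<dots> = - (\<Sum>b\<in>UNIV. (\<Sum>a\<in>UNIV. \<Sum>e\<in>UNIV. Gm a e b * u a * u e) * V b)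
      + 2 * z * (\<Sum>a\<in>UNIV. G a * u a) * (\<Sum>b\<in>UNIV. u b * V b)"
      by (simp only: sum.distrib sum_negf sum_distrib_left[symmetric])
    finally show ?thesis .
  qed
  then show ?thesis unfolding l r m q .
qed


lemma P3:
  fixes u w G :: "'n::finite \<Rightarrow> real"
  assumes w: "\<And>b. w b = - (\<Sum>a\<in>UNIV. \<Sum>e\<in>UNIV. Gm a e b * u a * u e) + 2 * z * (\<Sum>a\<in>UNIV. G a * u a) * u b"
  shows "(\<Sum>b\<in>UNIV. \<Sum>c\<in>UNIV. u b * w c * K b c)
     = - (\<Sum>a\<in>UNIV. \<Sum>b\<in>UNIV. \<Sum>c\<in>UNIV. u a * u b * u c * (\<Sum>e\<in>UNIV. Gm a c e * K b e))
       + 2 * z * (\<Sum>a\<in>UNIV. G a * u a) * (\<Sum>b\<in>UNIV. \<Sum>c\<in>UNIV. u b * u c * K b c)"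
proof -
  have e1: "(\<Sum>b\<in>UNIV. \<Sum>c\<in>UNIV. u b * w c * K b c) = (\<Sum>b\<in>UNIV. \<Sum>c\<in>UNIV. w b * u c * (\<lambda>b c. K c b) b c)"
    by (subst sum.swap) (simp add: algebra_simps)
  have e2: "(\<Sum>a\<in>UNIV. \<Sum>b\<in>UNIV. \<Sum>c\<in>UNIV. u a * u b * u c * (\<Sum>e\<in>UNIV. Gm a b e * (\<lambda>b c. K c b) e c))
     = (\<Sum>a\<in>UNIV. \<Sum>b\<in>UNIV. \<Sum>c\<in>UNIV. u a * u b * u c * (\<Sum>e\<in>UNIV. Gm a c e * K b e))"
    by (subst sw3b) (simp add: algebra_simps)
  have e3: "(\<Sum>b\<in>UNIV. \<Sum>c\<in>UNIV. u b * u c * (\<lambda>b c. K c b) b c) = (\<Sum>b\<in>UNIV. \<Sum>c\<in>UNIV. u b * u c * K b c)"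
    by (subst sum.swap) (simp add: algebra_simps)
  show ?thesis unfolding e1 P2[OF w] e2 e3 ..
qed

lemma sym3_sum:
  fixes u :: "'n::finite \<Rightarrow> real"
  shows "(\<Sum>a\<in>UNIV. \<Sum>b\<in>UNIV. \<Sum>c\<in>UNIV. u a * u b * u c * sym3 X a b c)
       = (\<Sum>a\<in>UNIV. \<Sum>b\<in>UNIV. \<Sum>c\<in>UNIV. u a * u b * u c * X a b c)"
proof -
  let ?S = "\<lambda>f. (\<Sum>a\<in>UNIV. \<Sum>b\<in>UNIV. \<Sum>c\<in>UNIV. u a * u b * u c * f a b c)"
  have p1: "?S (\<lambda>a b c. X a c b) = ?S X" by (subst sw3b) (simp add: algebra_simps)
  have p2: "?S (\<lambda>a b c. X b a c) = ?S X" by (subst sum.swap) (simp add: algebra_simps)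
  have p3: "?S (\<lambda>a b c. X b c a) = ?S X" by (subst sw3a) (simp add: algebra_simps)
  have p4: "?S (\<lambda>a b c. X c a b) = ?S X" by (subst (2) sw3a) (simp add: algebra_simps)
  have p5: "?S (\<lambda>a b c. X c b a) = ?S X"
  proof -
    have "?S (\<lambda>a b c. X c b a) = ?S (\<lambda>a b c. X b a c)" by (subst sw3a) (simp add: algebra_simps)
    then show ?thesis using p2 by simp
  qed
  have "?S (sym3 X) = (?S X + ?S (\<lambda>a b c. X a c b) + ?S (\<lambda>a b c. X b a c) + ?S (\<lambda>a b c. X b c a)
      + ?S (\<lambda>a b c. X c a b) + ?S (\<lambda>a b c. X c b a)) / 6"
    by (simp add: sym3_def sum.distrib[symmetric] sum_divide_distrib algebra_simps add_divide_distrib)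
  then show ?thesis unfolding p1 p2 p3 p4 p5 by simp
qed


lemma GEO:
  fixes u w G :: "'n::finite \<Rightarrow> real"
  assumes w: "\<And>b. w b = - (\<Sum>a\<in>UNIV. \<Sum>e\<in>UNIV. Gm a e b * u a * u e) + 2 * z * (\<Sum>a\<in>UNIV. G a * u a) * u b"
  shows "(\<Sum>b\<in>UNIV. \<Sum>c\<in>UNIV. w b * u c * K b c + u b * w c * K b c + u b * u c * (\<Sum>a\<in>UNIV. u a * dK a b c))
    = (\<Sum>a\<in>UNIV. \<Sum>b\<in>UNIV. \<Sum>c\<in>UNIV. u a * u b * u c * (dK a b c - (\<Sum>e\<in>UNIV. Gm a b e * K e c)
         - (\<Sum>e\<in>UNIV. Gm a c e * K b e) + 4 * z * G a * K b c))"
proof -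
  have l: "(\<Sum>b\<in>UNIV. \<Sum>c\<in>UNIV. w b * u c * K b c + u b * w c * K b c + u b * u c * (\<Sum>a\<in>UNIV. u a * dK a b c))
     = (\<Sum>b\<in>UNIV. \<Sum>c\<in>UNIV. w b * u c * K b c) + (\<Sum>b\<in>UNIV. \<Sum>c\<in>UNIV. u b * w c * K b c)
       + (\<Sum>b\<in>UNIV. \<Sum>c\<in>UNIV. u b * u c * (\<Sum>a\<in>UNIV. u a * dK a b c))"
    by (simp only: sum.distrib)
  have r: "(\<Sum>a\<in>UNIV. \<Sum>b\<in>UNIV. \<Sum>c\<in>UNIV. u a * u b * u c * (dK a b c - (\<Sum>e\<in>UNIV. Gm a b e * K e c)
         - (\<Sum>e\<in>UNIV. Gm a c e * K b e) + 4 * z * G a * K b c))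
     = (\<Sum>a\<in>UNIV. \<Sum>b\<in>UNIV. \<Sum>c\<in>UNIV. u a * u b * u c * dK a b c)
       - (\<Sum>a\<in>UNIV. \<Sum>b\<in>UNIV. \<Sum>c\<in>UNIV. u a * u b * u c * (\<Sum>e\<in>UNIV. Gm a b e * K e c))
       - (\<Sum>a\<in>UNIV. \<Sum>b\<in>UNIV. \<Sum>c\<in>UNIV. u a * u b * u c * (\<Sum>e\<in>UNIV. Gm a c e * K b e))
       + (\<Sum>a\<in>UNIV. \<Sum>b\<in>UNIV. \<Sum>c\<in>UNIV. u a * u b * u c * (4 * z * G a * K b c))"
    by (simp only: sum.distrib sum_subtractf right_diff_distrib distrib_left)
  have g: "(\<Sum>a\<in>UNIV. \<Sum>b\<in>UNIV. \<Sum>c\<in>UNIV. u a * u b * u c * (4 * z * G a * K b c))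
     = 4 * z * ((\<Sum>a\<in>UNIV. G a * u a) * (\<Sum>b\<in>UNIV. \<Sum>c\<in>UNIV. u b * u c * K b c))"
    unfolding sum_distrib_right unfolding sum_distrib_left by (simp add: algebra_simps)
  show ?thesis unfolding l r g P1 P2[OF w] P3[OF w] by (simp add: algebra_simps)
qed

lemma chain_pd:
  assumes "K differentiable (at (c t))" "(c has_vector_derivative v) (at t)"
  shows "((\<lambda>t. K (c t)) has_real_derivative (\<Sum>a\<in>UNIV. v $ a * pd a K (c t))) (at t)"
proof -
  obtain K' where K': "(K has_derivative K') (at (c t))" using assms(1) differentiable_def by blast
  have lin: "linear K'" using K' has_derivative_linear by blast
  have cd: "(c has_derivative (\<lambda>h. h *\<^sub>R v)) (at t)" using assms(2) has_vector_derivative_def by blast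
  have "((K \<circ> c) has_derivative (K' \<circ> (\<lambda>h. h *\<^sub>R v))) (at t)"
    by (rule diff_chain_at[OF cd K'])
  moreover have "(K' \<circ> (\<lambda>h. h *\<^sub>R v)) = (*) (K' v)"
    using lin by (auto simp: fun_eq_iff linear_scale)
  moreover have "K' v = (\<Sum>a\<in>UNIV. v $ a * pd a K (c t))"
  proof -
    have "K' v = K' (\<Sum>a\<in>UNIV. v $ a *\<^sub>R axis a 1)"
      using basis_expansion[of v] by (simp add: scalar_mult_eq_scaleR)
    also have "\<dots> = (\<Sum>a\<in>UNIV. v $ a * K' (axis a 1))"
      using lin by (simp add: linear_sum linear_scale)
    finally show ?thesis using pd_has_derivative(1)[OF K'] by simp
  qed
  ultimately show ?thesis by (simp add: has_field_derivative_def o_def)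
qed

lemma comp_deriv:
  assumes "(u has_vector_derivative u') (at t)"
  shows "((\<lambda>t. u t $ b) has_real_derivative (u' $ b)) (at t)"
  using bounded_linear.has_vector_derivative[OF bounded_linear_vec_nth assms]
  by (simp add: has_real_derivative_iff_has_vector_derivative)


lemma deriv_prod3:
  assumes "(f has_real_derivative f') (at t)" "(g has_real_derivative g') (at t)" "(h has_real_derivative h') (at t)"
  shows "((\<lambda>t. f t * g t * h t) has_real_derivative (f' * g t * h t + f t * g' * h t + f t * g t * h')) (at t)"
  using assms by (auto intro!: derivative_eq_intros simp: algebra_simps)

lemma Fform:
  fixes Gam :: "'n::finite \<Rightarrow> 'n \<Rightarrow> 'n \<Rightarrow> real^'n \<Rightarrow> real"
  shows "eta_formula Gam tau x uv = (\<Sum>b\<in>UNIV. \<Sum>c\<in>UNIV. uv $ b * uv $ c * kten Gam tau [b, c] x)"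
proof -
  have s: "(\<Sum>b\<in>UNIV. \<Sum>c\<in>UNIV. uv $ b * uv $ c * kten Gam tau [b, c] x)
     = (\<Sum>b\<in>UNIV. \<Sum>c\<in>UNIV. uv $ b * uv $ c * kraw Gam tau b c x)"
  proof -
    have "(\<Sum>b\<in>UNIV. \<Sum>c\<in>UNIV. uv $ b * uv $ c * kten Gam tau [b, c] x)
      = ((\<Sum>b\<in>UNIV. \<Sum>c\<in>UNIV. uv $ b * uv $ c * kraw Gam tau b c x)
        + (\<Sum>b\<in>UNIV. \<Sum>c\<in>UNIV. uv $ b * uv $ c * kraw Gam tau c b x)) / 2"
      by (simp add: kten_def ten2_def sum.distrib[symmetric] sum_divide_distrib algebra_simps add_divide_distrib)
    moreover have "(\<Sum>b\<in>UNIV. \<Sum>c\<in>UNIV. uv $ b * uv $ c * kraw Gam tau c b x)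
        = (\<Sum>b\<in>UNIV. \<Sum>c\<in>UNIV. uv $ b * uv $ c * kraw Gam tau b c x)"
      by (subst sum.swap) (simp add: algebra_simps)
    ultimately show ?thesis by simp
  qed
  show ?thesis unfolding s
    by (simp add: kraw_def eta_formula_def power2_eq_square sum_product sum_distrib_left sum_distrib_right
        sum.distrib sum_subtractf algebra_simps)
qed


lemma Killing:
  fixes Gam :: "'n::finite \<Rightarrow> 'n \<Rightarrow> 'n \<Rightarrow> real^'n \<Rightarrow> real"
  assumes oU: "open U" and sGam: "\<And>i j k. smooth_on_open U (Gam i j k)"
    and stau: "smooth_on_open U tau" and toe: "third_order_eq Gam U tau" and xU: "x \<in> U"
  shows "sym3 (\<lambda>a b c. cov Gam 4 (kten Gam tau) [a, b, c] x) a b c = 0"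
proof -
  let ?CK = "\<lambda>a b c. cov Gam 4 (ten2 (kraw Gam tau)) [a, b, c] x"
  have "(\<lambda>a b c. cov Gam 4 (kten Gam tau) [a, b, c] x) = (\<lambda>a b c. (?CK a b c + ?CK a c b) / 2)"
    by (intro ext K_eq[OF oU xU sm_kraw[OF oU sGam stau]])
  then have "sym3 (\<lambda>a b c. cov Gam 4 (kten Gam tau) [a, b, c] x) a b c = sym3 ?CK a b c"
    by (simp add: sym3_half)
  also have "?CK = (\<lambda>a b c. D1 Gam tau [a] x * D2 Gam tau [b, c] x + tau x * D3 Gam tau [a, b, c] x
     + 2 * cov Gam 0 (ten2 (Sch Gam)) [a, b, c] x * (tau x)^2
     + 4 * Sch Gam b c x * tau x * D1 Gam tau [a] x
     - 1/2 * (D2 Gam tau [a, b] x * D1 Gam tau [c] x + D1 Gam tau [b] x * D2 Gam tau [a, c] x))"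
    by (intro ext CK_eq[OF oU sGam stau xU])
  also have "sym3 \<dots> a b c = tau x * sym3 (\<lambda>a b c. D3 Gam tau [a, b, c] x + 4 * Sch Gam a b x * D1 Gam tau [c] x
       + 2 * tau x * cov Gam 0 (ten2 (Sch Gam)) [a, b, c] x) a b c"
    by (rule sym3_P[where p = "\<lambda>a. D1 Gam tau [a] x" and q = "\<lambda>a b. D2 Gam tau [a, b] x"
          and r = "\<lambda>a b c. D3 Gam tau [a, b, c] x" and C = "\<lambda>a b c. cov Gam 0 (ten2 (Sch Gam)) [a, b, c] x"
          and S = "\<lambda>b c. Sch Gam b c x" and t = "tau x"])
  also have "\<dots> = 0" using toe xU unfolding third_order_eq_def by simp
  finally show ?thesis .
qed


lemma canc:
  fixes s w A B ub z :: real
  assumes "s \<noteq> 0" "s * (w + A / s - 2 * z * (B / s) * ub) = 0"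
  shows "s * w = - A + 2 * z * B * ub"
proof -
  have "s * (w + A / s - 2 * z * (B / s) * ub) = s * w + A - 2 * z * B * ub"
    using assms(1) by (simp add: field_simps)
  then show ?thesis using assms(2) by linarith
qed

lemma sm_kten:
  fixes Gam :: "'n::finite \<Rightarrow> 'n \<Rightarrow> 'n \<Rightarrow> real^'n \<Rightarrow> real"
  assumes oU: "open U" and sGam: "\<And>i j k. smooth_on_open U (Gam i j k)"
    and stau: "smooth_on_open U tau"
  shows "smooth_on_open U (kten Gam tau [b, c])"
proof -
  have "kten Gam tau [b, c] = (\<lambda>y. (kraw Gam tau b c y + kraw Gam tau c b y) / 2)"
    by (simp add: kten_def ten2_def)
  then show ?thesis by (simp only:) (intro sm_intros oU sm_kraw[OF oU sGam stau])
qed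

lemma geod_const:
  fixes Gam :: "'n::finite \<Rightarrow> 'n \<Rightarrow> 'n \<Rightarrow> real^'n \<Rightarrow> real"
  assumes oU: "open U" and sGam: "\<And>i j k. smooth_on_open U (Gam i j k)"
    and stau: "smooth_on_open U tau" and toe: "third_order_eq Gam U tau"
    and wg: "weighted_geod Gam U I c c' s u u'" and tI: "t \<in> I"
  shows "((\<lambda>t. eta_formula Gam tau (c t) (u t)) has_real_derivative 0) (at t)"
proof -
  define x where "x = c t"
  define z where "z = 1 / (real CARD('n) + 1)"
  have xU: "x \<in> U" and cd: "(c has_vector_derivative c' t) (at t)" and s0: "s t \<noteq> 0"
    and ut: "u t = s t *\<^sub>R c' t" and ud: "(u has_vector_derivative u' t) (at t)"
    and geq: "\<And>a. s t * (u' t $ a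
                 + (\<Sum>b\<in>UNIV. \<Sum>e\<in>UNIV. Gam b e a (c t) * c' t $ b * u t $ e)
                 - 2 / (real CARD('n) + 1) * (\<Sum>b\<in>UNIV. \<Sum>e\<in>UNIV. Gam b e e (c t) * c' t $ b)
                     * u t $ a) = 0"
    using wg tI unfolding weighted_geod_def x_def by auto
  let ?K = "\<lambda>b c. kten Gam tau [b, c] x"
  let ?dK = "\<lambda>a b c. pd a (kten Gam tau [b, c]) x"
  let ?U = "\<lambda>a. u t $ a"
  let ?W = "\<lambda>a. s t * u' t $ a"
  let ?G = "\<lambda>a. \<Sum>e\<in>UNIV. Gam a e e x"
  define F' where "F' = (\<Sum>b\<in>UNIV. \<Sum>c\<in>UNIV. u' t $ b * ?U c * ?K b c + ?U b * u' t $ c * ?K b c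
        + ?U b * ?U c * (\<Sum>a\<in>UNIV. c' t $ a * ?dK a b c))"
  have cu: "c' t $ a = ?U a / s t" for a using ut s0 by simp
  have D: "((\<lambda>t. eta_formula Gam tau (c t) (u t)) has_real_derivative F') (at t)"
    unfolding Fform F'_def x_def
    by (intro DERIV_sum deriv_prod3 comp_deriv[OF ud] chain_pd[OF _ cd]
        sm_at[OF oU sm_kten[OF oU sGam stau] xU[unfolded x_def]])
  have W: "?W b = - (\<Sum>a\<in>UNIV. \<Sum>e\<in>UNIV. Gam a e b x * ?U a * ?U e) + 2 * z * (\<Sum>a\<in>UNIV. ?G a * ?U a) * ?U b" for b
  proof -
    have A: "(\<Sum>a\<in>UNIV. \<Sum>e\<in>UNIV. Gam a e b (c t) * c' t $ a * u t $ e)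
       = (\<Sum>a\<in>UNIV. \<Sum>e\<in>UNIV. Gam a e b x * ?U a * ?U e) / s t"
      unfolding cu x_def sum_divide_distrib by (simp add: algebra_simps)
    have B: "(\<Sum>a\<in>UNIV. \<Sum>e\<in>UNIV. Gam a e e (c t) * c' t $ a) = (\<Sum>a\<in>UNIV. ?G a * ?U a) / s t"
      unfolding cu x_def by (simp add: algebra_simps sum_distrib_left sum_distrib_right sum_divide_distrib)
    have "s t * (u' t $ b + (\<Sum>a\<in>UNIV. \<Sum>e\<in>UNIV. Gam a e b x * ?U a * ?U e) / s t
       - 2 * z * ((\<Sum>a\<in>UNIV. ?G a * ?U a) / s t) * ?U b) = 0"
      using geq[of b] unfolding A B by (simp add: z_def)
    then show ?thesis by (rule canc[OF s0])
  qed
  have sF: "s t * F' = (\<Sum>b\<in>UNIV. \<Sum>c\<in>UNIV. ?W b * ?U c * ?K b c + ?U b * ?W c * ?K b c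
        + ?U b * ?U c * (\<Sum>a\<in>UNIV. ?U a * ?dK a b c))"
  proof -
    have h: "s t * (\<Sum>a\<in>UNIV. c' t $ a * ?dK a b c) = (\<Sum>a\<in>UNIV. ?U a * ?dK a b c)" for b c
      by (simp add: sum_distrib_left ut algebra_simps)
    have p: "s t * (u' t $ b * ?U c * ?K b c + ?U b * u' t $ c * ?K b c
        + ?U b * ?U c * (\<Sum>a\<in>UNIV. c' t $ a * ?dK a b c))
      = ?W b * ?U c * ?K b c + ?U b * ?W c * ?K b c + ?U b * ?U c * (\<Sum>a\<in>UNIV. ?U a * ?dK a b c)" for b c
      unfolding h[symmetric] by (simp add: algebra_simps)
    show ?thesis unfolding F'_def sum_distrib_left[of "s t"] p ..
  qed
  also have "\<dots> = (\<Sum>a\<in>UNIV. \<Sum>b\<in>UNIV. \<Sum>c\<in>UNIV. ?U a * ?U b * ?U c * (?dK a b c - (\<Sum>e\<in>UNIV. Gam a b e x * ?K e c)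
         - (\<Sum>e\<in>UNIV. Gam a c e x * ?K b e) + 4 * z * ?G a * ?K b c))"
    by (rule GEO[OF W])
  also have "\<dots> = (\<Sum>a\<in>UNIV. \<Sum>b\<in>UNIV. \<Sum>c\<in>UNIV. ?U a * ?U b * ?U c * cov Gam 4 (kten Gam tau) [a, b, c] x)"
    unfolding cov3 by (simp add: z_def)
  also have "\<dots> = (\<Sum>a\<in>UNIV. \<Sum>b\<in>UNIV. \<Sum>c\<in>UNIV. ?U a * ?U b * ?U c * sym3 (\<lambda>a b c. cov Gam 4 (kten Gam tau) [a, b, c] x) a b c)"
    by (rule sym3_sum[symmetric])
  also have "\<dots> = 0" by (simp add: Killing[OF oU sGam stau toe xU])
  finally have "F' = 0" using s0 by simp
  then show ?thesis using D by simp
qed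


lemma eta_tr:
  fixes Gam :: "'n::finite \<Rightarrow> 'n \<Rightarrow> 'n \<Rightarrow> real^'n \<Rightarrow> real"
  shows "eta_tractor Gam tau x uv = eta_formula Gam tau x uv"
  unfolding eta_tractor_def eta_formula_def
  by (simp add: UNIV_option_conv sum.reindex Sig_def Htr_def power2_eq_square sum_product
      sum_distrib_left sum_distrib_right sum.distrib[symmetric] sum_subtractf[symmetric] algebra_simps)

theorem mainTheorem15:
  fixes Gam :: "'n::finite \<Rightarrow> 'n \<Rightarrow> 'n \<Rightarrow> real^'n \<Rightarrow> real"
    and U :: "(real^'n) set"
    and tau :: "real^'n \<Rightarrow> real"
  assumes "CARD('n) \<ge> 2"
    and "open U"
    and "\<forall>i j k. smooth_on_open U (Gam i j k)"
    and "\<forall>i j k. \<forall>x\<in>U. Gam i j k x = Gam j i k x"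
    and "smooth_on_open U tau"
    and "third_order_eq Gam U tau"
  shows "(\<forall>I c c' s u u'. open I \<and> is_interval I \<and> weighted_geod Gam U I c c' s u u' \<longrightarrow>
            (\<forall>t\<in>I. eta_tractor Gam tau (c t) (u t) = eta_formula Gam tau (c t) (u t)) \<and>
            (\<forall>t1\<in>I. \<forall>t2\<in>I. eta_formula Gam tau (c t1) (u t1) = eta_formula Gam tau (c t2) (u t2)))
       \<and> (\<forall>x\<in>U. \<forall>a b c. sym3 (\<lambda>a b c. cov Gam 4 (kten Gam tau) [a, b, c] x) a b c = 0)"
proof -
  have oU: "open U" using assms(2) .
  have sGam: "\<And>i j k. smooth_on_open U (Gam i j k)" using assms(3) by blast
  have stau: "smooth_on_open U tau" using assms(5) .
  have toe: "third_order_eq Gam U tau" using assms(6) .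
  have G: "(\<forall>t\<in>I. eta_tractor Gam tau (c t) (u t) = eta_formula Gam tau (c t) (u t)) \<and>
            (\<forall>t1\<in>I. \<forall>t2\<in>I. eta_formula Gam tau (c t1) (u t1) = eta_formula Gam tau (c t2) (u t2))"
    if H: "open I \<and> is_interval I \<and> weighted_geod Gam U I c c' s u u'" for I c c' s u u'
  proof
    show "\<forall>t\<in>I. eta_tractor Gam tau (c t) (u t) = eta_formula Gam tau (c t) (u t)"
      by (simp add: eta_tr)
    have "\<exists>C. \<forall>t\<in>I. eta_formula Gam tau (c t) (u t) = C"
    proof (rule has_field_derivative_zero_constant)
      show "convex I" using H is_interval_convex by blast
      fix t assume "t \<in> I"
      then have "((\<lambda>t. eta_formula Gam tau (c t) (u t)) has_real_derivative 0) (at t)"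
        using geod_const[OF oU sGam stau toe] H by blast
      then show "((\<lambda>t. eta_formula Gam tau (c t) (u t)) has_field_derivative 0) (at t within I)"
        by (rule has_field_derivative_at_within)
    qed
    then show "\<forall>t1\<in>I. \<forall>t2\<in>I. eta_formula Gam tau (c t1) (u t1) = eta_formula Gam tau (c t2) (u t2)"
      by metis
  qed
  show ?thesis
    using G Killing[OF oU sGam stau toe] by blast
qed

end
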